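(* Let $n\ge 1$. For a partition $\lambda$ of $n$, let $r_\lambda$ be the number of binary trees with leaf set $[n]=\{1,\dots,n\}$ that are fixed by the relabeling action of a permutation $\sigma\in\mathfrak{S}_n$ of cycle type $\lambda$ (this number depends only on $\lambda$), let $\lambda^2$ denote the cycle type of $\sigma^2$, and let $z_\lambda=\prod_{i\ge1} i^{m_i}m_i!$, where $m_i$ is the number of parts of $\lambda$ equal to $i$. Then the number of unlabeled unordered tanglegrams with $n$ leaves equals \[ \frac12\sum_{\lambda\vdash n}\frac{r_\lambda^2}{z_\lambda}+\frac12\sum_{\lambda\vdash n}\frac{r_{\lambda^2}}{z_\lambda}. \]
   Context: A binary tree with leaf set $A$ is a rooted tree in which every vertex has either zero or two children, the children of a vertex are unordered, the leaves (vertices with no children) are labeled bijectively by the elements of $A$, and the internal vertices are unlabeled; the single-vertex tree (one labeled vertex) counts as a binary tree. Two such trees are the same if there is a root-preserving tree isomorphism between them preserving leaf labels. A permutation $\sigma$ of $[n]$ acts on binary trees with leaf set $[n]$ by replacing each leaf label $i$ with $\sigma(i)$. An unordered tanglegram with leaf set $[n]$ is an unordered pair (a multiset of size two, so the two trees may coincide) of binary trees with leaf set $[n]$; $\mathfrak{S}_n$ acts on these by relabeling both trees simultaneously, and an unlabeled unordered tanglegram with $n$ leaves is an orbit of this action. *)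

theory Defs
  imports Complex_Main "HOL-Library.Multiset" "HOL-Combinatorics.Permutations"
begin

text \<open>Plane representatives of binary trees: leaves labelled by naturals,
  internal vertices have exactly two (here ordered) children.\<close>
datatype tr = Lf nat | Nd tr tr

fun leaves :: "tr \<Rightarrow> nat list" where
  "leaves (Lf a) = [a]"
| "leaves (Nd l r) = leaves l @ leaves r"

fun map_tr :: "(nat \<Rightarrow> nat) \<Rightarrow> tr \<Rightarrow> tr" where
  "map_tr f (Lf a) = Lf (f a)"
| "map_tr f (Nd l r) = Nd (map_tr f l) (map_tr f r)"

inductive tr_iso :: "tr \<Rightarrow> tr \<Rightarrow> bool" where
  "tr_iso (Lf a) (Lf a)"
| "tr_iso l l' \<Longrightarrow> tr_iso r r' \<Longrightarrow> tr_iso (Nd l r) (Nd l' r')"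
| "tr_iso l r' \<Longrightarrow> tr_iso r l' \<Longrightarrow> tr_iso (Nd l r) (Nd l' r')"

definition valid_tr :: "nat set \<Rightarrow> tr \<Rightarrow> bool" where
  "valid_tr A t \<longleftrightarrow> distinct (leaves t) \<and> set (leaves t) = A"

definition BT :: "nat \<Rightarrow> tr set set" where
  "BT n = {t. valid_tr {1..n} t} // {(s, t). tr_iso s t}"

definition act :: "(nat \<Rightarrow> nat) \<Rightarrow> tr set \<Rightarrow> tr set" where
  "act \<sigma> X = map_tr \<sigma> ` X"

text \<open>Unordered tanglegrams with leaf set [n]: multisets of size two of binary trees.\<close>
definition TG :: "nat \<Rightarrow> tr set multiset set" where
  "TG n = {{#X, Y#} | X Y. X \<in> BT n \<and> Y \<in> BT n}"

definition tg_orbit :: "nat \<Rightarrow> tr set multiset \<Rightarrow> tr set multiset set" where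
  "tg_orbit n M = {image_mset (act \<sigma>) M | \<sigma>. \<sigma> permutes {1..n}}"

definition num_tanglegrams :: "nat \<Rightarrow> nat" where
  "num_tanglegrams n = card (tg_orbit n ` TG n)"

definition partitions :: "nat \<Rightarrow> nat multiset set" where
  "partitions n = {lam. (\<forall>x\<in>#lam. 0 < x) \<and> sum_mset lam = n}"

definition perm_orbit :: "(nat \<Rightarrow> nat) \<Rightarrow> nat \<Rightarrow> nat set" where
  "perm_orbit \<sigma> x = {(\<sigma> ^^ k) x | k. True}"

definition cycle_type :: "nat \<Rightarrow> (nat \<Rightarrow> nat) \<Rightarrow> nat multiset" where
  "cycle_type n \<sigma> = image_mset card (mset_set (perm_orbit \<sigma> ` {1..n}))"

definition perm_of_type :: "nat \<Rightarrow> nat multiset \<Rightarrow> (nat \<Rightarrow> nat)" where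
  "perm_of_type n lam = (SOME \<sigma>. \<sigma> permutes {1..n} \<and> cycle_type n \<sigma> = lam)"

definition r_fix :: "nat \<Rightarrow> nat multiset \<Rightarrow> nat" where
  "r_fix n lam = card {X \<in> BT n. act (perm_of_type n lam) X = X}"

definition sq_type :: "nat \<Rightarrow> nat multiset \<Rightarrow> nat multiset" where
  "sq_type n lam = cycle_type n (perm_of_type n lam \<circ> perm_of_type n lam)"

definition z_fac :: "nat multiset \<Rightarrow> nat" where
  "z_fac lam = (\<Prod>i\<in>set_mset lam. i ^ count lam i * fact (count lam i))"

end

theory Submission
  imports Defs "HOL-Algebra.Sym_Groups" "HOL-Algebra.Group_Action" "HOL-Combinatorics.Orbits" "HOL-Combinatorics.Cycles"
begin


lemma map_tr_comp: "map_tr f (map_tr g t) = map_tr (f \<circ> g) t"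
  by (induction t) auto

lemma map_tr_id: "map_tr id t = t"
  by (induction t) auto

lemma leaves_map_tr: "leaves (map_tr f t) = map f (leaves t)"
  by (induction t) auto

lemma tr_iso_map: "tr_iso s t \<Longrightarrow> tr_iso (map_tr f s) (map_tr f t)"
  by (induction rule: tr_iso.induct) (auto intro: tr_iso.intros)

lemma valid_map:
  assumes "\<sigma> permutes {1..n}" "valid_tr {1..n} t"
  shows "valid_tr {1..n} (map_tr \<sigma> t)"
proof -
  have "inj \<sigma>" using assms(1) permutes_inj by blast
  then show ?thesis using assms permutes_image[OF assms(1)]
    by (auto simp: valid_tr_def leaves_map_tr distinct_map intro: inj_on_subset[of _ UNIV])
qed

lemma BT_elem:
  assumes "X \<in> BT n"
  obtains t where "valid_tr {1..n} t" "X = {s. tr_iso t s}"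
  using assms unfolding BT_def quotient_def by auto

lemma BT_intro: "valid_tr {1..n} t \<Longrightarrow> {s. tr_iso t s} \<in> BT n"
  unfolding BT_def quotient_def by auto

lemma act_comp: "act (\<sigma> \<circ> \<tau>) X = act \<sigma> (act \<tau> X)"
  unfolding act_def by (auto simp: map_tr_comp[symmetric] image_image)

lemma act_id: "act id X = X"
  unfolding act_def by (auto simp: map_tr_id)

lemma act_class:
  assumes "\<sigma> permutes {1..n}"
  shows "act \<sigma> {s. tr_iso t s} = {s. tr_iso (map_tr \<sigma> t) s}"
proof (intro Set.set_eqI HOL.iffI)
  fix u assume "u \<in> act \<sigma> {s. tr_iso t s}"
  then show "u \<in> {s. tr_iso (map_tr \<sigma> t) s}" by (auto simp: act_def tr_iso_map)
next
  fix u assume "u \<in> {s. tr_iso (map_tr \<sigma> t) s}"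
  then have "tr_iso (map_tr (Hilbert_Choice.inv \<sigma>) (map_tr \<sigma> t)) (map_tr (Hilbert_Choice.inv \<sigma>) u)"
    by (auto intro: tr_iso_map)
  moreover have "Hilbert_Choice.inv \<sigma> \<circ> \<sigma> = id" "\<sigma> \<circ> Hilbert_Choice.inv \<sigma> = id"
    using assms permutes_inv_o by auto
  ultimately have "tr_iso t (map_tr (Hilbert_Choice.inv \<sigma>) u)" "u = map_tr \<sigma> (map_tr (Hilbert_Choice.inv \<sigma>) u)"
    by (simp_all add: map_tr_comp map_tr_id)
  then show "u \<in> act \<sigma> {s. tr_iso t s}" unfolding act_def by blast
qed

lemma act_BT:
  assumes "\<sigma> permutes {1..n}" "X \<in> BT n"
  shows "act \<sigma> X \<in> BT n"
proof -
  obtain t where "valid_tr {1..n} t" "X = {s. tr_iso t s}" using assms(2) BT_elem by blast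
  then show ?thesis using act_class[OF assms(1)] valid_map[OF assms(1)] BT_intro by auto
qed

lemma act_inv:
  assumes "\<sigma> permutes {1..n}"
  shows "act (Hilbert_Choice.inv \<sigma>) (act \<sigma> X) = X" "act \<sigma> (act (Hilbert_Choice.inv \<sigma>) X) = X"
proof -
  have "Hilbert_Choice.inv \<sigma> \<circ> \<sigma> = id" "\<sigma> \<circ> Hilbert_Choice.inv \<sigma> = id"
    using assms permutes_inv_o by auto
  then show "act (Hilbert_Choice.inv \<sigma>) (act \<sigma> X) = X" "act \<sigma> (act (Hilbert_Choice.inv \<sigma>) X) = X"
    by (metis act_comp act_id)+
qed

lemma leaves_nonempty: "leaves t \<noteq> []"
  by (induction t) auto

lemma finite_trees: "finite {t. set (leaves t) \<subseteq> A \<and> length (leaves t) \<le> m}" if "finite A"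
proof (induction m)
  case 0
  then show ?case using leaves_nonempty by simp
next
  case (Suc m)
  let ?F = "{t. set (leaves t) \<subseteq> A \<and> length (leaves t) \<le> m}"
  have "{t. set (leaves t) \<subseteq> A \<and> length (leaves t) \<le> Suc m} \<subseteq>
        Lf ` A \<union> (\<lambda>(l, r). Nd l r) ` (?F \<times> ?F)"
  proof
    fix t assume t: "t \<in> {t. set (leaves t) \<subseteq> A \<and> length (leaves t) \<le> Suc m}"
    show "t \<in> Lf ` A \<union> (\<lambda>(l, r). Nd l r) ` (?F \<times> ?F)"
    proof (cases t)
      case (Lf a) then show ?thesis using t by auto
    next
      case (Nd l r)
      have "leaves l \<noteq> []" "leaves r \<noteq> []" by (rule leaves_nonempty)+
      then have "length (leaves l) \<ge> 1" "length (leaves r) \<ge> 1"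
        by (auto simp: Suc_le_eq)
      then show ?thesis using t Nd by force
    qed
  qed
  moreover have "finite (Lf ` A \<union> (\<lambda>(l, r). Nd l r) ` (?F \<times> ?F))"
    using Suc that by auto
  ultimately show ?case by (rule finite_subset)
qed

lemma finite_valid: "finite {t. valid_tr {1..n} t}"
proof -
  have "{t. valid_tr {1..n} t} \<subseteq> {t. set (leaves t) \<subseteq> {1..n} \<and> length (leaves t) \<le> n}"
    by (auto simp: valid_tr_def dest: distinct_card)
  then show ?thesis using finite_trees[of "{1..n}" n] finite_subset by auto
qed

lemma BT_image: "BT n = (\<lambda>t. {s. tr_iso t s}) ` {t. valid_tr {1..n} t}"
  unfolding BT_def quotient_def by auto

lemma finite_BT: "finite (BT n)"
  unfolding BT_image using finite_valid by blast


definition TGact :: "nat \<Rightarrow> (nat \<Rightarrow> nat) \<Rightarrow> tr set multiset \<Rightarrow> tr set multiset" where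
  "TGact n \<sigma> = (\<lambda>M \<in> TG n. image_mset (act \<sigma>) M)"

lemma TG_act:
  assumes "\<sigma> permutes {1..n}" "M \<in> TG n"
  shows "image_mset (act \<sigma>) M \<in> TG n"
  using assms act_BT unfolding TG_def by fastforce

lemma image_mset_act_inv:
  assumes "\<sigma> permutes {1..n}"
  shows "image_mset (act (Hilbert_Choice.inv \<sigma>)) (image_mset (act \<sigma>) M) = M"
  using act_inv(1)[OF assms] by (simp add: multiset.map_comp o_def)

lemma TGact_Bij:
  assumes "\<sigma> permutes {1..n}"
  shows "TGact n \<sigma> \<in> Bij (TG n)"
proof -
  have i: "Hilbert_Choice.inv \<sigma> permutes {1..n}" using assms permutes_inv by blast
  have "bij_betw (TGact n \<sigma>) (TG n) (TG n)"
    apply (rule bij_betw_byWitness[where f'="TGact n (Hilbert_Choice.inv \<sigma>)"])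
    using TG_act[OF assms] TG_act[OF i] image_mset_act_inv[OF assms] image_mset_act_inv[OF i]
      inv_inv_eq[OF permutes_bij[OF assms]]
    by (auto simp: TGact_def)
  then show ?thesis unfolding Bij_def TGact_def by auto
qed

lemma TGact_group_action: "group_action (sym_group n) (TG n) (TGact n)"
  unfolding group_action_def group_hom_def group_hom_axioms_def
proof (intro conjI)
  show "group (sym_group n)" by (rule sym_group_is_group)
  show "group (BijGroup (TG n))" by (rule group_BijGroup)
  show "TGact n \<in> hom (sym_group n) (BijGroup (TG n))"
  proof (rule homI)
    fix \<sigma> assume "\<sigma> \<in> carrier (sym_group n)"
    then show "TGact n \<sigma> \<in> carrier (BijGroup (TG n))"
      using TGact_Bij by (simp add: sym_group_carrier BijGroup_def)
  next
    fix \<sigma> \<tau> assume s: "\<sigma> \<in> carrier (sym_group n)" and t: "\<tau> \<in> carrier (sym_group n)"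
    then have ps: "\<sigma> permutes {1..n}" and pt: "\<tau> permutes {1..n}" by (simp_all add: sym_group_carrier)
    have eq: "\<And>M. image_mset (act (\<sigma> \<circ> \<tau>)) M = image_mset (act \<sigma>) (image_mset (act \<tau>) M)"
      subgoal for M by (induction M) (simp_all add: act_comp[unfolded comp_def])
      done
    have "TGact n (\<sigma> \<circ> \<tau>) = compose (TG n) (TGact n \<sigma>) (TGact n \<tau>)"
      unfolding TGact_def compose_def by (rule restrict_ext) (use TG_act[OF pt] eq in auto)
    then show "TGact n (\<sigma> \<otimes>\<^bsub>sym_group n\<^esub> \<tau>) = TGact n \<sigma> \<otimes>\<^bsub>BijGroup (TG n)\<^esub> TGact n \<tau>"
      using TGact_Bij[OF ps] TGact_Bij[OF pt] by (simp add: sym_group_mult BijGroup_def)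
  qed
qed

lemma finite_TG: "finite (TG n)"
proof -
  have "TG n = (\<lambda>(X, Y). {#X, Y#}) ` (BT n \<times> BT n)" unfolding TG_def by auto
  then show ?thesis using finite_BT by simp
qed

lemma orbits_TG: "orbits (sym_group n) (TG n) (TGact n) = tg_orbit n ` TG n"
  unfolding Group_Action.orbits_def Group_Action.orbit_def tg_orbit_def
  by (auto simp: sym_group_carrier TGact_def)

lemma burnside_TG:
  "num_tanglegrams n * fact n =
   (\<Sum>\<sigma> \<in> {\<sigma>. \<sigma> permutes {1..n}}. card {M \<in> TG n. image_mset (act \<sigma>) M = M})"
proof -
  interpret group_action "sym_group n" "TG n" "TGact n" by (rule TGact_group_action)
  have fc: "finite (carrier (sym_group n))"
    by (simp add: sym_group_def finite_permutations)
  have "card (orbits (sym_group n) (TG n) (TGact n)) * order (sym_group n) =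
        (\<Sum>g \<in> carrier (sym_group n). card (invariants (TG n) (TGact n) g))"
    by (rule burnside[OF fc finite_TG])
  moreover have "\<And>g. invariants (TG n) (TGact n) g = {M \<in> TG n. image_mset (act g) M = M}"
    by (auto simp: invariants_def TGact_def)
  moreover have "carrier (sym_group n) = {\<sigma>. \<sigma> permutes {1..n}}" by (auto simp: sym_group_carrier)
  ultimately show ?thesis
    using card_permutations[of "{1..n}" n] by (simp add: orbits_TG num_tanglegrams_def order_def)
qed


lemma doubleton_eq: "({#a, b#} = {#c, d#}) \<longleftrightarrow> (a = c \<and> b = d) \<or> (a = d \<and> b = c)"
  by (auto simp: add_eq_conv_ex)

definition Fx :: "nat \<Rightarrow> (nat \<Rightarrow> nat) \<Rightarrow> nat" where
  "Fx n \<sigma> = card {X \<in> BT n. act \<sigma> X = X}"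

lemma card_fibers:
  assumes "finite S" "finite P" "g ` P \<subseteq> S"
  shows "card P = (\<Sum>M\<in>S. card {p\<in>P. g p = M})"
proof -
  have "P = (\<Union>M\<in>S. {p\<in>P. g p = M})" using assms by auto
  then have "card P = card (\<Union>M\<in>S. {p\<in>P. g p = M})" by simp
  also have "\<dots> = (\<Sum>M\<in>S. card {p\<in>P. g p = M})"
    by (rule card_UN_disjoint) (use assms in auto)
  finally show ?thesis .
qed

lemma fixed_TG_count:
  assumes \<sigma>: "\<sigma> permutes {1..n}"
  shows "2 * card {M \<in> TG n. image_mset (act \<sigma>) M = M} = Fx n \<sigma> ^ 2 + Fx n (\<sigma> \<circ> \<sigma>)"
proof -
  let ?S = "{M \<in> TG n. image_mset (act \<sigma>) M = M}"
  let ?g = "\<lambda>(X, Y). {#X, Y#}"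
  define P where "P = {(X, Y). X \<in> BT n \<and> Y \<in> BT n \<and> {#act \<sigma> X, act \<sigma> Y#} = {#X, Y#}}"
  define Fix where "Fix = {X \<in> BT n. act \<sigma> X = X}"
  define A where "A = Fix \<times> Fix"
  define B where "B = (\<lambda>X. (X, act \<sigma> X)) ` {X \<in> BT n. act (\<sigma> \<circ> \<sigma>) X = X}"
  define D where "D = (\<lambda>X. (X, X)) ` Fix"
  have fBT: "finite (BT n)" by (rule finite_BT)
  have fP: "finite P"
    by (rule finite_subset[of _ "BT n \<times> BT n"]) (auto simp: P_def fBT)
  have fD: "finite D" unfolding D_def Fix_def using fBT by auto
  have "?S \<subseteq> ?g ` (BT n \<times> BT n)" by (auto simp: TG_def)
  moreover have "finite (?g ` (BT n \<times> BT n))" using fBT by simp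
  ultimately have fS: "finite ?S" by (rule finite_subset)
  have PAB: "P = A \<union> B"
  proof (intro Set.set_eqI HOL.iffI)
    fix p assume "p \<in> P"
    then obtain X Y where p: "p = (X, Y)" "X \<in> BT n" "Y \<in> BT n"
      "{#act \<sigma> X, act \<sigma> Y#} = {#X, Y#}" unfolding P_def by auto
    then consider "act \<sigma> X = X" "act \<sigma> Y = Y" | "act \<sigma> X = Y" "act \<sigma> Y = X"
      using doubleton_eq by metis
    then show "p \<in> A \<union> B"
    proof cases
      case 1 then show ?thesis using p by (auto simp: A_def Fix_def)
    next
      case 2
      then have "act (\<sigma> \<circ> \<sigma>) X = X" by (simp add: act_comp)
      then show ?thesis using p 2 unfolding B_def by auto
    qed
  next
    fix p assume "p \<in> A \<union> B"
    then show "p \<in> P"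
    proof
      assume "p \<in> A" then show ?thesis by (auto simp: A_def Fix_def P_def)
    next
      assume "p \<in> B"
      then obtain X where "p = (X, act \<sigma> X)" "X \<in> BT n" "act \<sigma> (act \<sigma> X) = X"
        by (auto simp: B_def act_comp)
      then show ?thesis using act_BT[OF \<sigma>] by (auto simp: P_def)
    qed
  qed
  have ABD: "A \<inter> B = D"
    by (auto simp: A_def B_def D_def Fix_def act_comp image_iff)
  have fA: "finite A" "finite B" using fP PAB by auto
  have cardA: "card A = Fx n \<sigma> ^ 2" by (simp add: A_def Fx_def Fix_def power2_eq_square card_cartesian_product)
  have cardB: "card B = Fx n (\<sigma> \<circ> \<sigma>)"
    unfolding B_def Fx_def by (rule card_image) (auto intro: inj_onI)
  have cardD: "card D = card Fix" unfolding D_def by (rule card_image) (auto intro: inj_onI)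
  have PD: "card P + card D = card A + card B"
    using card_Un_Int[OF fA] PAB ABD by simp
  have gP: "?g ` P \<subseteq> ?S"
    by (auto simp: P_def TG_def act_BT[OF \<sigma>])
  have gD: "?g ` D \<subseteq> ?S"
    by (auto simp: D_def Fix_def TG_def)
  have "card P + card D = (\<Sum>M\<in>?S. card {p\<in>P. ?g p = M} + card {p\<in>D. ?g p = M})"
    using card_fibers[OF fS fP gP] card_fibers[OF fS fD gD] by (simp add: sum.distrib)
  also have "\<dots> = (\<Sum>M\<in>?S. 2)"
  proof (rule sum.cong[OF refl])
    fix M assume "M \<in> ?S"
    then obtain X Y where M: "M = {#X, Y#}" "X \<in> BT n" "Y \<in> BT n"
      "image_mset (act \<sigma>) M = M" unfolding TG_def by auto
    then have Mfix: "{#act \<sigma> X, act \<sigma> Y#} = {#X, Y#}" by simp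
    show "card {p\<in>P. ?g p = M} + card {p\<in>D. ?g p = M} = 2"
    proof (cases "X = Y")
      case True
      then have "act \<sigma> X = X" using Mfix doubleton_eq by metis
      then have "{p\<in>P. ?g p = M} = {(X, X)}" "{p\<in>D. ?g p = M} = {(X, X)}"
        using M True by (auto simp: P_def D_def Fix_def doubleton_eq)
      then show ?thesis by simp
    next
      case False
      have e1: "{p\<in>P. ?g p = M} = {(X, Y), (Y, X)}"
        using M Mfix by (auto simp: P_def doubleton_eq)
      have e2: "{p\<in>D. ?g p = M} = {}"
        using M False by (auto simp: D_def doubleton_eq)
      show ?thesis unfolding e1 e2 using False by simp
    qed
  qed
  finally have "card P + card D = 2 * card ?S" by simp
  then show ?thesis using PD cardA cardB by simp
qed


definition ct :: "nat set \<Rightarrow> (nat \<Rightarrow> nat) \<Rightarrow> nat multiset" where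
  "ct S \<sigma> = image_mset card (mset_set (Orbits.orbit \<sigma> ` S))"

definition ISO :: "nat set \<Rightarrow> (nat \<Rightarrow> nat) \<Rightarrow> nat set \<Rightarrow> (nat \<Rightarrow> nat) \<Rightarrow> (nat \<Rightarrow> nat) set" where
  "ISO S \<sigma> T \<tau> = {\<pi>. bij_betw \<pi> S T \<and> (\<forall>x\<in>S. \<pi> (\<sigma> x) = \<tau> (\<pi> x)) \<and> (\<forall>x. x \<notin> S \<longrightarrow> \<pi> x = x)}"

lemma perm_orbit_eq: "permutation \<sigma> \<Longrightarrow> perm_orbit \<sigma> x = Orbits.orbit \<sigma> x"
  by (simp add: perm_orbit_def orbit_altdef_permutation)

lemma cycle_type_ct: "\<sigma> permutes {1..n} \<Longrightarrow> cycle_type n \<sigma> = ct {1..n} \<sigma>"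
  unfolding cycle_type_def ct_def
  using perm_orbit_eq[of \<sigma>] permutation_permutes by fastforce

lemma orbit_self: "permutation \<sigma> \<Longrightarrow> x \<in> Orbits.orbit \<sigma> x"
  by (rule permutation_self_in_orbit)

lemma orbit_eq: "permutation \<sigma> \<Longrightarrow> y \<in> Orbits.orbit \<sigma> x \<Longrightarrow> Orbits.orbit \<sigma> y = Orbits.orbit \<sigma> x"
  using cyclic_on_orbit' orbit_cyclic_eq3 by metis

lemma orbit_disj: "permutation \<sigma> \<Longrightarrow> z \<in> Orbits.orbit \<sigma> x \<Longrightarrow> z \<in> Orbits.orbit \<sigma> y \<Longrightarrow> Orbits.orbit \<sigma> x = Orbits.orbit \<sigma> y"
  using orbit_eq by metis

lemma orbit_finite: "permutation \<sigma> \<Longrightarrow> finite (Orbits.orbit \<sigma> x)"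
  by (simp add: finite_orbit orbit_self)

lemma orbit_card_pos: "permutation \<sigma> \<Longrightarrow> card (Orbits.orbit \<sigma> x) > 0"
  using orbit_finite[of \<sigma> x] orbit_nonempty[of \<sigma> x] by (simp add: card_gt_0_iff)

lemma orbit_sub: assumes "\<sigma> ` S \<subseteq> S" "x \<in> S" shows "Orbits.orbit \<sigma> x \<subseteq> S"
proof
  fix y assume "y \<in> Orbits.orbit \<sigma> x" then show "y \<in> S"
    by induction (use assms in auto)
qed

lemma orbit_funpow: "permutation \<sigma> \<Longrightarrow> Orbits.orbit \<sigma> x = {(\<sigma> ^^ i) x | i. True}"
  by (rule orbit_altdef_permutation)

lemma orbit_funpow_in: "permutation \<sigma> \<Longrightarrow> (\<sigma> ^^ i) x \<in> Orbits.orbit \<sigma> x"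
  by (rule funpow_in_orbit[OF orbit_self])

lemma orbit_period:
  assumes "permutation \<sigma>"
  shows "(\<sigma> ^^ i) x = (\<sigma> ^^ j) x \<longleftrightarrow> i mod card (Orbits.orbit \<sigma> x) = j mod card (Orbits.orbit \<sigma> x)"
proof -
  let ?p = "funpow_dist1 \<sigma> x x"
  have self: "x \<in> Orbits.orbit \<sigma> x" using assms by (rule orbit_self)
  have O: "Orbits.orbit \<sigma> x = (\<lambda>n. (\<sigma> ^^ n) x) ` {0..<?p}" by (rule orbit_conv_funpow_dist1[OF self])
  have inj: "inj_on (\<lambda>n. (\<sigma> ^^ n) x) {0..<?p}" by (rule inj_on_funpow_dist1[OF self])
  have cp: "card (Orbits.orbit \<sigma> x) = ?p" using O inj by (simp add: card_image)
  have pp: "(\<sigma> ^^ ?p) x = x" by (rule funpow_dist1_prop[OF self])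
  have pos: "?p > 0" by simp
  have "(\<sigma> ^^ i) x = (\<sigma> ^^ (i mod ?p)) x" "(\<sigma> ^^ j) x = (\<sigma> ^^ (j mod ?p)) x"
    using funpow_mod_eq[OF pp] by metis+
  moreover have "(\<sigma> ^^ (i mod ?p)) x = (\<sigma> ^^ (j mod ?p)) x \<longleftrightarrow> i mod ?p = j mod ?p"
    using inj pos unfolding inj_on_def by auto
  ultimately show ?thesis using cp by simp
qed

lemma orbit_step_eq: "permutation \<sigma> \<Longrightarrow> Orbits.orbit \<sigma> (\<sigma> x) = Orbits.orbit \<sigma> x"
  by (rule permutation_orbit_step)

lemma closed_diff_orbit:
  assumes "permutation \<sigma>" "\<sigma> ` S \<subseteq> S"
  shows "\<sigma> ` (S - Orbits.orbit \<sigma> a) \<subseteq> S - Orbits.orbit \<sigma> a"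
proof
  fix z assume "z \<in> \<sigma> ` (S - Orbits.orbit \<sigma> a)"
  then obtain y where y: "y \<in> S" "y \<notin> Orbits.orbit \<sigma> a" "z = \<sigma> y" by auto
  have "\<sigma> y \<notin> Orbits.orbit \<sigma> a"
  proof
    assume "\<sigma> y \<in> Orbits.orbit \<sigma> a"
    then have "Orbits.orbit \<sigma> a = Orbits.orbit \<sigma> (\<sigma> y)" using orbit_eq[OF assms(1)] by metis
    also have "\<dots> = Orbits.orbit \<sigma> y" by (rule orbit_step_eq[OF assms(1)])
    finally show False using y orbit_self[OF assms(1), of y] by simp
  qed
  then show "z \<in> S - Orbits.orbit \<sigma> a" using y assms(2) by auto
qed

lemma orbits_diff:
  assumes "permutation \<sigma>" "\<sigma> ` S \<subseteq> S" "a \<in> S"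
  shows "Orbits.orbit \<sigma> ` (S - Orbits.orbit \<sigma> a) = Orbits.orbit \<sigma> ` S - {Orbits.orbit \<sigma> a}"
proof (intro Set.set_eqI HOL.iffI)
  fix C assume "C \<in> Orbits.orbit \<sigma> ` (S - Orbits.orbit \<sigma> a)"
  then obtain y where "y \<in> S" "y \<notin> Orbits.orbit \<sigma> a" "C = Orbits.orbit \<sigma> y" by auto
  then show "C \<in> Orbits.orbit \<sigma> ` S - {Orbits.orbit \<sigma> a}" using orbit_self[OF assms(1), of y] by auto
next
  fix C assume "C \<in> Orbits.orbit \<sigma> ` S - {Orbits.orbit \<sigma> a}"
  then obtain y where "y \<in> S" "C = Orbits.orbit \<sigma> y" "Orbits.orbit \<sigma> y \<noteq> Orbits.orbit \<sigma> a" by auto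
  moreover then have "y \<notin> Orbits.orbit \<sigma> a" using orbit_eq[OF assms(1)] by metis
  ultimately show "C \<in> Orbits.orbit \<sigma> ` (S - Orbits.orbit \<sigma> a)" by auto
qed

lemma ct_diff:
  assumes "permutation \<sigma>" "\<sigma> ` S \<subseteq> S" "a \<in> S" "finite S"
  shows "ct (S - Orbits.orbit \<sigma> a) \<sigma> = ct S \<sigma> - {#card (Orbits.orbit \<sigma> a)#}"
proof -
  have fin: "finite (Orbits.orbit \<sigma> ` S)" using assms(4) by simp
  have "mset_set (Orbits.orbit \<sigma> ` (S - Orbits.orbit \<sigma> a)) = mset_set (Orbits.orbit \<sigma> ` S) - {#Orbits.orbit \<sigma> a#}"
    using orbits_diff[OF assms(1-3)] mset_set_Diff[OF fin, of "{Orbits.orbit \<sigma> a}"] assms(3) by simp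
  moreover have "{#Orbits.orbit \<sigma> a#} \<subseteq># mset_set (Orbits.orbit \<sigma> ` S)" using assms(3) fin by simp
  ultimately show ?thesis unfolding ct_def by (simp add: image_mset_Diff)
qed

lemma count_ct:
  assumes "finite S"
  shows "count (ct S \<sigma>) k = card {C \<in> Orbits.orbit \<sigma> ` S. card C = k}"
proof -
  have "count (ct S \<sigma>) k = (\<Sum>y\<in>card -` {k} \<inter> Orbits.orbit \<sigma> ` S. 1)"
    unfolding ct_def count_image_mset using assms by (intro sum.cong) auto
  also have "\<dots> = card {C \<in> Orbits.orbit \<sigma> ` S. card C = k}" by (simp add: Int_commute Collect_conj_eq vimage_def)
  finally show ?thesis .
qed

lemma card_elems_of_length:
  assumes "permutation \<sigma>" "\<sigma> ` S \<subseteq> S" "finite S"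
  shows "card {x \<in> S. card (Orbits.orbit \<sigma> x) = k} = k * count (ct S \<sigma>) k"
proof -
  let ?O = "{C \<in> Orbits.orbit \<sigma> ` S. card C = k}"
  have eq: "{x \<in> S. card (Orbits.orbit \<sigma> x) = k} = \<Union> ?O"
  proof (intro Set.set_eqI HOL.iffI)
    fix x assume "x \<in> {x \<in> S. card (Orbits.orbit \<sigma> x) = k}"
    then show "x \<in> \<Union> ?O" using orbit_self[OF assms(1), of x] by auto
  next
    fix x assume "x \<in> \<Union> ?O"
    then obtain y where "y \<in> S" "x \<in> Orbits.orbit \<sigma> y" "card (Orbits.orbit \<sigma> y) = k" by auto
    moreover from this have "x \<in> S" using orbit_sub[OF assms(2)] by blast
    moreover from calculation have "Orbits.orbit \<sigma> x = Orbits.orbit \<sigma> y" using orbit_eq[OF assms(1)] by simp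
    ultimately show "x \<in> {x \<in> S. card (Orbits.orbit \<sigma> x) = k}" by simp
  qed
  have pw: "pairwise disjnt ?O"
  proof (rule pairwiseI)
    fix C D assume "C \<in> ?O" "D \<in> ?O" "C \<noteq> D"
    then obtain x y where "C = Orbits.orbit \<sigma> x" "D = Orbits.orbit \<sigma> y" by auto
    then show "disjnt C D" using \<open>C \<noteq> D\<close> orbit_disj[OF assms(1)] unfolding disjnt_def by blast
  qed
  have fin: "\<And>C. C \<in> ?O \<Longrightarrow> finite C" using orbit_finite[OF assms(1)] by auto
  have "card (\<Union> ?O) = (\<Sum>C\<in>?O. card C)"
    by (rule card_Union_disjoint[OF pw fin])
  also have "\<dots> = (\<Sum>C\<in>?O. k)" by simp
  also have "\<dots> = k * card ?O" by simp
  finally have "card (\<Union> ?O) = k * card ?O" .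
  then show ?thesis unfolding eq count_ct[OF assms(3)] .
qed

lemma ct_pos: assumes "permutation \<sigma>" "finite S" shows "0 \<notin># ct S \<sigma>"
proof
  assume "0 \<in># ct S \<sigma>"
  then obtain x where "card (Orbits.orbit \<sigma> x) = 0" using assms(2) by (auto simp: ct_def)
  then show False using orbit_card_pos[OF assms(1), of x] by simp
qed

lemma ct_empty_iff: assumes "finite S" shows "ct S \<sigma> = {#} \<longleftrightarrow> S = {}"
  using assms by (auto simp: ct_def mset_set_empty_iff)


lemma z_fac_empty: "z_fac {#} = 1" by (simp add: z_fac_def)

lemma z_fac_pos: "0 \<notin># lam \<Longrightarrow> z_fac lam > 0"
  unfolding z_fac_def by (rule prod_pos) (auto intro: gr0I)

lemma z_fac_remove:
  assumes "k \<in># lam"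
  shows "z_fac lam = k * count lam k * z_fac (lam - {#k#})"
proof -
  let ?L' = "lam - {#k#}"
  define f where "f L i = i ^ count L i * fact (count L i)" for L :: "nat multiset" and i
  have zdef: "z_fac L = (\<Prod>i\<in>set_mset L. f L i)" for L unfolding z_fac_def f_def by simp
  obtain c where c: "count lam k = Suc c" using assms by (metis count_greater_zero_iff not0_implies_Suc gr_implies_not0)
  have cnt: "count ?L' i = (if i = k then c else count lam i)" for i using c by auto
  have sub: "set_mset ?L' \<subseteq> set_mset lam" by (meson in_diffD subsetI)
  have "z_fac ?L' = (\<Prod>i\<in>set_mset lam. f ?L' i)"
    unfolding zdef
  proof (rule prod.mono_neutral_left[OF _ sub])
    show "\<forall>i\<in>set_mset lam - set_mset ?L'. f ?L' i = 1"
      by (auto simp: f_def not_in_iff)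
  qed simp
  also have "\<dots> = f ?L' k * (\<Prod>i\<in>set_mset lam - {k}. f ?L' i)"
    using assms by (simp add: prod.remove)
  also have "(\<Prod>i\<in>set_mset lam - {k}. f ?L' i) = (\<Prod>i\<in>set_mset lam - {k}. f lam i)"
    by (rule prod.cong) (auto simp: f_def cnt)
  finally have 1: "z_fac ?L' = f ?L' k * (\<Prod>i\<in>set_mset lam - {k}. f lam i)" .
  have 2: "z_fac lam = f lam k * (\<Prod>i\<in>set_mset lam - {k}. f lam i)"
    unfolding zdef using assms by (simp add: prod.remove)
  have 3: "f lam k = k * count lam k * f ?L' k"
    unfolding f_def using c cnt[of k] by (simp add: algebra_simps)
  show ?thesis using 1 2 3 by simp
qed

lemma iso_orbit_image:
  assumes "\<pi> \<in> ISO S \<sigma> T \<tau>" "x \<in> S" "\<sigma> ` S \<subseteq> S" "permutation \<sigma>"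
  shows "\<pi> ` Orbits.orbit \<sigma> x = Orbits.orbit \<tau> (\<pi> x)"
proof (rule orbit_inverse)
  show "x \<in> Orbits.orbit \<sigma> x" by (rule orbit_self[OF assms(4)])
  fix y assume "y \<in> Orbits.orbit \<sigma> x"
  then have "y \<in> S" using orbit_sub[OF assms(3,2)] by blast
  then show "\<tau> (\<pi> y) = \<pi> (\<sigma> y)" using assms(1) by (simp add: ISO_def)
qed

lemma ct_iso:
  assumes "\<pi> \<in> ISO S \<sigma> T \<tau>" "\<sigma> ` S \<subseteq> S" "permutation \<sigma>" "finite S"
  shows "ct S \<sigma> = ct T \<tau>"
proof -
  have bij: "bij_betw \<pi> S T" using assms(1) by (simp add: ISO_def)
  then have T: "T = \<pi> ` S" and inj: "inj_on \<pi> S" by (auto simp: bij_betw_def)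
  have "Orbits.orbit \<tau> ` T = (\<lambda>x. \<pi> ` Orbits.orbit \<sigma> x) ` S"
    using iso_orbit_image[OF assms(1) _ assms(2,3)] T by (auto simp: image_iff)
  also have "\<dots> = (\<lambda>C. \<pi> ` C) ` (Orbits.orbit \<sigma> ` S)" by (simp add: image_image)
  finally have O: "Orbits.orbit \<tau> ` T = (\<lambda>C. \<pi> ` C) ` (Orbits.orbit \<sigma> ` S)" .
  have sub: "\<And>C. C \<in> Orbits.orbit \<sigma> ` S \<Longrightarrow> C \<subseteq> S" using orbit_sub[OF assms(2)] by auto
  have inj2: "inj_on (\<lambda>C. \<pi> ` C) (Orbits.orbit \<sigma> ` S)"
    by (rule inj_onI) (use sub inj in \<open>meson inj_on_image_eq_iff\<close>)
  have "ct T \<tau> = image_mset card (image_mset (\<lambda>C. \<pi> ` C) (mset_set (Orbits.orbit \<sigma> ` S)))"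
    unfolding ct_def O image_mset_mset_set[OF inj2] ..
  also have "\<dots> = image_mset (\<lambda>C. card (\<pi> ` C)) (mset_set (Orbits.orbit \<sigma> ` S))"
    by (simp add: multiset.map_comp o_def)
  also have "\<dots> = image_mset card (mset_set (Orbits.orbit \<sigma> ` S))"
  proof (rule image_mset_cong)
    fix C assume "C \<in># mset_set (Orbits.orbit \<sigma> ` S)"
    then have "C \<subseteq> S" using sub assms(4) by simp
    then show "card (\<pi> ` C) = card C" using inj by (meson card_image inj_on_subset)
  qed
  finally show ?thesis unfolding ct_def ..
qed


lemma piece_card:
  assumes ps: "permutation \<sigma>" and pt: "permutation \<tau>"
    and cS: "\<sigma> ` S \<subseteq> S" and cT: "\<tau> ` T \<subseteq> T"
    and a: "a \<in> S" and a': "a' \<in> T"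
    and k: "card (Orbits.orbit \<sigma> a) = card (Orbits.orbit \<tau> a')"
  shows "card {\<pi> \<in> ISO S \<sigma> T \<tau>. \<pi> a = a'} = card (ISO (S - Orbits.orbit \<sigma> a) \<sigma> (T - Orbits.orbit \<tau> a') \<tau>)"
proof -
  define C where "C = Orbits.orbit \<sigma> a"
  define C' where "C' = Orbits.orbit \<tau> a'"
  define S' where "S' = S - C"
  define T' where "T' = T - C'"
  have CS: "C \<subseteq> S" unfolding C_def by (rule orbit_sub[OF cS a])
  have CT: "C' \<subseteq> T" unfolding C'_def by (rule orbit_sub[OF cT a'])
  have cS': "\<sigma> ` S' \<subseteq> S'" unfolding S'_def C_def by (rule closed_diff_orbit[OF ps cS])
  have key: "(\<sigma> ^^ i) a = (\<sigma> ^^ j) a \<longleftrightarrow> (\<tau> ^^ i) a' = (\<tau> ^^ j) a'" for i j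
    using orbit_period[OF ps, of i a j] orbit_period[OF pt, of i a' j] k by simp
  have Cpow: "x \<in> C \<longleftrightarrow> (\<exists>i. x = (\<sigma> ^^ i) a)" for x
    unfolding C_def orbit_funpow[OF ps] by auto
  have C'pow: "y \<in> C' \<longleftrightarrow> (\<exists>i. y = (\<tau> ^^ i) a')" for y
    unfolding C'_def orbit_funpow[OF pt] by auto
  define E where "E \<pi>' = (\<lambda>x. if x \<in> C then (\<tau> ^^ funpow_dist \<sigma> a x) a' else \<pi>' x)" for \<pi>' :: "nat \<Rightarrow> nat"
  define R where "R \<pi> = (\<lambda>x. if x \<in> C then x else \<pi> x)" for \<pi> :: "nat \<Rightarrow> nat"
  have Ev: "E \<pi>' ((\<sigma> ^^ i) a) = (\<tau> ^^ i) a'" for \<pi>' i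
  proof -
    have inC: "(\<sigma> ^^ i) a \<in> C" using Cpow by blast
    then have "(\<sigma> ^^ funpow_dist \<sigma> a ((\<sigma> ^^ i) a)) a = (\<sigma> ^^ i) a"
      unfolding C_def by (rule funpow_dist_prop)
    then have "(\<tau> ^^ funpow_dist \<sigma> a ((\<sigma> ^^ i) a)) a' = (\<tau> ^^ i) a'" using key by blast
    then show ?thesis using inC by (simp add: E_def)
  qed
  let ?P = "{\<pi> \<in> ISO S \<sigma> T \<tau>. \<pi> a = a'}"
  let ?I = "ISO S' \<sigma> T' \<tau>"
  have P1: "\<pi> ((\<sigma> ^^ i) a) = (\<tau> ^^ i) a'" if "\<pi> \<in> ?P" for \<pi> i
  proof (induction i)
    case 0 then show ?case using that by simp
  next
    case (Suc i)
    have "(\<sigma> ^^ i) a \<in> S" using Cpow CS by blast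
    then have "\<pi> (\<sigma> ((\<sigma> ^^ i) a)) = \<tau> (\<pi> ((\<sigma> ^^ i) a))" using that by (simp add: ISO_def)
    then show ?case using Suc by simp
  qed
  have R_in: "R \<pi> \<in> ?I" if "\<pi> \<in> ?P" for \<pi>
  proof -
    have iso: "\<pi> \<in> ISO S \<sigma> T \<tau>" and pa: "\<pi> a = a'" using that by auto
    have bij: "bij_betw \<pi> S T" using iso by (simp add: ISO_def)
    have img: "\<pi> ` C = C'" using iso_orbit_image[OF iso a cS ps] pa by (simp add: C_def C'_def)
    have "bij_betw \<pi> S' T'"
    proof -
      have "\<pi> ` S' = \<pi> ` S - \<pi> ` C" unfolding S'_def
        using bij CS inj_on_image_set_diff[of \<pi> S S C] by (simp add: bij_betw_def)
      then have "\<pi> ` S' = T'" using bij img by (simp add: bij_betw_def T'_def)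
      moreover have "inj_on \<pi> S'" using bij by (auto simp: bij_betw_def S'_def intro: inj_on_subset)
      ultimately show ?thesis by (simp add: bij_betw_def)
    qed
    then have "bij_betw (R \<pi>) S' T'"
      by (rule bij_betw_cong[THEN iffD1, rotated]) (auto simp: R_def S'_def)
    moreover have "\<forall>x\<in>S'. R \<pi> (\<sigma> x) = \<tau> (R \<pi> x)"
    proof
      fix x assume x: "x \<in> S'"
      then have "\<sigma> x \<in> S'" using cS' by blast
      then show "R \<pi> (\<sigma> x) = \<tau> (R \<pi> x)" using x iso by (auto simp: R_def S'_def ISO_def)
    qed
    moreover have "\<forall>x. x \<notin> S' \<longrightarrow> R \<pi> x = x" using iso by (auto simp: R_def S'_def ISO_def)
    ultimately show ?thesis by (simp add: ISO_def)
  qed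
  have ER: "E (R \<pi>) = \<pi>" if "\<pi> \<in> ?P" for \<pi>
  proof
    fix x show "E (R \<pi>) x = \<pi> x"
    proof (cases "x \<in> C")
      case True
      then obtain i where "x = (\<sigma> ^^ i) a" using Cpow by blast
      then show ?thesis using Ev P1[OF that] by simp
    next
      case False then show ?thesis by (simp add: E_def R_def)
    qed
  qed
  have E_in: "E \<pi>' \<in> ?P" if "\<pi>' \<in> ?I" for \<pi>'
  proof -
    have bij': "bij_betw \<pi>' S' T'" and int': "\<forall>x\<in>S'. \<pi>' (\<sigma> x) = \<tau> (\<pi>' x)"
      and out': "\<forall>x. x \<notin> S' \<longrightarrow> \<pi>' x = x" using that by (auto simp: ISO_def)
    have ea: "E \<pi>' a = a'" using Ev[of \<pi>' 0] by simp
    have imgC: "E \<pi>' ` C = C'"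
    proof (intro Set.set_eqI HOL.iffI)
      fix y assume "y \<in> E \<pi>' ` C"
      then obtain x where "x \<in> C" "y = E \<pi>' x" by blast
      moreover from this obtain i where "x = (\<sigma> ^^ i) a" using Cpow by blast
      ultimately show "y \<in> C'" using Ev C'pow by auto
    next
      fix y assume "y \<in> C'"
      then obtain i where "y = (\<tau> ^^ i) a'" using C'pow by blast
      then have "y = E \<pi>' ((\<sigma> ^^ i) a)" using Ev by simp
      then show "y \<in> E \<pi>' ` C" using Cpow by blast
    qed
    have imgS': "E \<pi>' ` S' = T'"
    proof -
      have "E \<pi>' ` S' = \<pi>' ` S'" by (rule image_cong) (auto simp: E_def S'_def)
      then show ?thesis using bij' by (simp add: bij_betw_def)
    qed
    have injC: "inj_on (E \<pi>') C"
    proof (rule inj_onI)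
      fix x y assume "x \<in> C" "y \<in> C" "E \<pi>' x = E \<pi>' y"
      moreover obtain i j where "x = (\<sigma> ^^ i) a" "y = (\<sigma> ^^ j) a"
        using Cpow \<open>x \<in> C\<close> \<open>y \<in> C\<close> by blast
      ultimately have "x = (\<sigma> ^^ i) a" "y = (\<sigma> ^^ j) a" "(\<tau> ^^ i) a' = (\<tau> ^^ j) a'"
        using Ev by auto
      then show "x = y" using key by blast
    qed
    have injS': "inj_on (E \<pi>') S'"
    proof -
      have "inj_on \<pi>' S'" using bij' by (simp add: bij_betw_def)
      then show ?thesis by (rule inj_on_cong[THEN iffD1, rotated]) (auto simp: E_def S'_def)
    qed
    have SU: "S = C \<union> S'" using CS by (auto simp: S'_def)
    have TU: "T = C' \<union> T'" using CT by (auto simp: T'_def)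
    have "inj_on (E \<pi>') S"
      unfolding SU using injC injS' imgC imgS' by (subst inj_on_Un) (auto simp: T'_def S'_def)
    moreover have "E \<pi>' ` S = T" unfolding SU TU using imgC imgS' by (simp add: image_Un)
    ultimately have "bij_betw (E \<pi>') S T" by (simp add: bij_betw_def)
    moreover have "\<forall>x\<in>S. E \<pi>' (\<sigma> x) = \<tau> (E \<pi>' x)"
    proof
      fix x assume x: "x \<in> S"
      show "E \<pi>' (\<sigma> x) = \<tau> (E \<pi>' x)"
      proof (cases "x \<in> C")
        case True
        then obtain i where xi: "x = (\<sigma> ^^ i) a" using Cpow by blast
        show ?thesis using Ev[of \<pi>' "Suc i"] Ev[of \<pi>' i] xi by simp
      next
        case False
        then have xS': "x \<in> S'" using x by (simp add: S'_def)
        then have "\<sigma> x \<in> S'" using cS' by blast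
        then show ?thesis using xS' int' by (simp add: E_def S'_def)
      qed
    qed
    moreover have "\<forall>x. x \<notin> S \<longrightarrow> E \<pi>' x = x" using out' CS by (auto simp: E_def S'_def)
    ultimately show ?thesis using ea by (simp add: ISO_def)
  qed
  have RE: "R (E \<pi>') = \<pi>'" if "\<pi>' \<in> ?I" for \<pi>'
  proof
    fix x show "R (E \<pi>') x = \<pi>' x"
      using that by (auto simp: R_def E_def ISO_def S'_def)
  qed
  have "bij_betw R ?P ?I"
    by (rule bij_betw_byWitness[where f'=E]) (use ER RE R_in E_in in auto)
  then show ?thesis unfolding S'_def T'_def C_def C'_def by (rule bij_betw_same_card)
qed


lemma ISO_empty: "ISO {} \<sigma> {} \<tau> = {id}"
  by (auto simp: ISO_def fun_eq_iff)

theorem iso_count: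
  assumes ps: "permutation \<sigma>" and pt: "permutation \<tau>"
  shows "finite S \<Longrightarrow> finite T \<Longrightarrow> \<sigma> ` S \<subseteq> S \<Longrightarrow> \<tau> ` T \<subseteq> T \<Longrightarrow> ct S \<sigma> = ct T \<tau> \<Longrightarrow>
         card (ISO S \<sigma> T \<tau>) = z_fac (ct S \<sigma>)"
proof (induction "card S" arbitrary: S T rule: less_induct)
  case less
  note fS = less.prems(1) and fT = less.prems(2) and cS = less.prems(3) and cT = less.prems(4)
    and eq = less.prems(5)
  show ?case
  proof (cases "S = {}")
    case True
    then have "ct T \<tau> = {#}" using eq ct_empty_iff[OF fS] by simp
    then have "T = {}" using ct_empty_iff[OF fT] by simp
    then show ?thesis using True by (simp add: ISO_empty ct_def z_fac_empty)
  next
    case False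
    then obtain a where a: "a \<in> S" by blast
    define lam where "lam = ct S \<sigma>"
    define k where "k = card (Orbits.orbit \<sigma> a)"
    define S' where "S' = S - Orbits.orbit \<sigma> a"
    have CS: "Orbits.orbit \<sigma> a \<subseteq> S" by (rule orbit_sub[OF cS a])
    have cS': "\<sigma> ` S' \<subseteq> S'" unfolding S'_def by (rule closed_diff_orbit[OF ps cS])
    have fS': "finite S'" using fS by (simp add: S'_def)
    have lt: "card S' < card S"
      unfolding S'_def using a orbit_self[OF ps, of a] fS CS
      by (intro psubset_card_mono) auto
    have ctS': "ct S' \<sigma> = lam - {#k#}" unfolding S'_def lam_def k_def by (rule ct_diff[OF ps cS a fS])
    have kin: "k \<in># lam" using a fS by (auto simp: lam_def k_def ct_def)
    have pos: "0 \<notin># lam" unfolding lam_def by (rule ct_pos[OF ps fS])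
    define A' where "A' = {a' \<in> T. card (Orbits.orbit \<tau> a') = k}"
    have cardA': "card A' = k * count lam k"
      unfolding A'_def lam_def eq by (rule card_elems_of_length[OF pt cT fT])
    define P where "P a' = {\<pi> \<in> ISO S \<sigma> T \<tau>. \<pi> a = a'}" for a'
    have cardP: "card (P a') = z_fac (lam - {#k#})" if a': "a' \<in> A'" for a'
    proof -
      define T' where "T' = T - Orbits.orbit \<tau> a'"
      have a'T: "a' \<in> T" and ka': "card (Orbits.orbit \<tau> a') = k" using a' by (auto simp: A'_def)
      have "card (P a') = card (ISO S' \<sigma> T' \<tau>)"
        unfolding P_def S'_def T'_def by (rule piece_card[OF ps pt cS cT a a'T]) (simp add: ka' k_def)
      also have "\<dots> = z_fac (ct S' \<sigma>)"
      proof (rule less.hyps[OF lt fS'])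
        show "finite T'" using fT by (simp add: T'_def)
        show "\<sigma> ` S' \<subseteq> S'" by (rule cS')
        show "\<tau> ` T' \<subseteq> T'" unfolding T'_def by (rule closed_diff_orbit[OF pt cT])
        have "ct T' \<tau> = ct T \<tau> - {#card (Orbits.orbit \<tau> a')#}" unfolding T'_def by (rule ct_diff[OF pt cT a'T fT])
        then show "ct S' \<sigma> = ct T' \<tau>" using ctS' ka' eq by (simp add: lam_def)
      qed
      finally show ?thesis using ctS' by simp
    qed
    have Un: "ISO S \<sigma> T \<tau> = (\<Union>a'\<in>A'. P a')"
    proof (intro Set.set_eqI HOL.iffI)
      fix \<pi> assume iso: "\<pi> \<in> ISO S \<sigma> T \<tau>"
      have "\<pi> a \<in> T" using iso a by (auto simp: ISO_def bij_betw_def)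
      moreover have "card (Orbits.orbit \<tau> (\<pi> a)) = k"
      proof -
        have "Orbits.orbit \<tau> (\<pi> a) = \<pi> ` Orbits.orbit \<sigma> a" using iso_orbit_image[OF iso a cS ps] by simp
        moreover have "inj_on \<pi> (Orbits.orbit \<sigma> a)" using iso CS by (auto simp: ISO_def bij_betw_def intro: inj_on_subset)
        ultimately show ?thesis by (simp add: card_image k_def)
      qed
      ultimately show "\<pi> \<in> (\<Union>a'\<in>A'. P a')" using iso by (auto simp: A'_def P_def)
    next
      fix \<pi> assume "\<pi> \<in> (\<Union>a'\<in>A'. P a')" then show "\<pi> \<in> ISO S \<sigma> T \<tau>" by (auto simp: P_def)
    qed
    have zpos: "z_fac (lam - {#k#}) > 0" using pos by (intro z_fac_pos) (meson in_diffD)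
    have finP: "finite (P a')" if "a' \<in> A'" for a'
      using cardP[OF that] zpos by (metis card.infinite less_irrefl)
    have "card (ISO S \<sigma> T \<tau>) = (\<Sum>a'\<in>A'. card (P a'))"
      unfolding Un by (rule card_UN_disjoint) (use fT finP in \<open>auto simp: A'_def P_def\<close>)
    also have "\<dots> = (\<Sum>a'\<in>A'. z_fac (lam - {#k#}))" using cardP by simp
    also have "\<dots> = k * count lam k * z_fac (lam - {#k#})" using cardA' by simp
    also have "\<dots> = z_fac lam" using z_fac_remove[OF kin] by simp
    finally show ?thesis by (simp add: lam_def)
  qed
qed


lemma ISO_permutes:
  assumes "\<sigma> permutes U" "\<tau> permutes U"
  shows "\<pi> \<in> ISO U \<sigma> U \<tau> \<longleftrightarrow> \<pi> permutes U \<and> \<pi> \<circ> \<sigma> = \<tau> \<circ> \<pi>"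
proof
  assume iso: "\<pi> \<in> ISO U \<sigma> U \<tau>"
  then have p: "\<pi> permutes U" by (intro bij_imp_permutes) (auto simp: ISO_def)
  have "(\<pi> \<circ> \<sigma>) x = (\<tau> \<circ> \<pi>) x" for x
  proof (cases "x \<in> U")
    case True then show ?thesis using iso by (simp add: ISO_def)
  next
    case False then show ?thesis using assms p by (simp add: permutes_not_in)
  qed
  then show "\<pi> permutes U \<and> \<pi> \<circ> \<sigma> = \<tau> \<circ> \<pi>" using p by auto
next
  assume "\<pi> permutes U \<and> \<pi> \<circ> \<sigma> = \<tau> \<circ> \<pi>"
  then show "\<pi> \<in> ISO U \<sigma> U \<tau>"
    by (auto simp: ISO_def permutes_imp_bij permutes_not_in fun_eq_iff)
qed

lemma permutes_closed: "\<sigma> permutes U \<Longrightarrow> \<sigma> ` U \<subseteq> U"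
  by (simp add: permutes_image)

lemma conj_exists:
  assumes "\<sigma> permutes U" "\<tau> permutes U" "finite U" "ct U \<sigma> = ct U \<tau>"
  obtains \<pi> where "\<pi> permutes U" "\<pi> \<circ> \<sigma> = \<tau> \<circ> \<pi>"
proof -
  have ps: "permutation \<sigma>" "permutation \<tau>" using assms permutation_permutes by blast+
  have "card (ISO U \<sigma> U \<tau>) = z_fac (ct U \<sigma>)"
    by (rule iso_count[OF ps assms(3) assms(3) permutes_closed[OF assms(1)] permutes_closed[OF assms(2)] assms(4)])
  moreover have "z_fac (ct U \<sigma>) > 0" by (rule z_fac_pos[OF ct_pos[OF ps(1) assms(3)]])
  ultimately have "ISO U \<sigma> U \<tau> \<noteq> {}" by (metis card.empty less_irrefl)
  then show ?thesis using that ISO_permutes[OF assms(1,2)] by blast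
qed

lemma class_count:
  assumes \<rho>: "\<rho> permutes U" and fU: "finite U"
  shows "card {\<sigma>. \<sigma> permutes U \<and> ct U \<sigma> = ct U \<rho>} * z_fac (ct U \<rho>) = fact (card U)"
proof -
  define CL where "CL = {\<sigma>. \<sigma> permutes U \<and> ct U \<sigma> = ct U \<rho>}"
  have prho: "permutation \<rho>" using \<rho> fU permutation_permutes by blast
  have fCL: "finite CL" unfolding CL_def
    by (rule finite_subset[OF _ finite_permutations[OF fU]]) auto
  have Un: "{\<pi>. \<pi> permutes U} = (\<Union>\<sigma>\<in>CL. ISO U \<rho> U \<sigma>)"
  proof (intro Set.set_eqI HOL.iffI)
    fix \<pi> assume "\<pi> \<in> {\<pi>. \<pi> permutes U}"
    then have p: "\<pi> permutes U" by simp
    define \<sigma> where "\<sigma> = \<pi> \<circ> \<rho> \<circ> Hilbert_Choice.inv \<pi>"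
    have ps: "\<sigma> permutes U" unfolding \<sigma>_def
      by (intro permutes_compose permutes_inv p \<rho>)
    have "\<pi> \<circ> \<rho> = \<sigma> \<circ> \<pi>" unfolding \<sigma>_def using permutes_inverses(2)[OF p]
      by (auto simp: fun_eq_iff)
    then have iso: "\<pi> \<in> ISO U \<rho> U \<sigma>" using ISO_permutes[OF \<rho> ps] p by simp
    have "ct U \<rho> = ct U \<sigma>" by (rule ct_iso[OF iso permutes_closed[OF \<rho>] prho fU])
    then show "\<pi> \<in> (\<Union>\<sigma>\<in>CL. ISO U \<rho> U \<sigma>)" using iso ps by (auto simp: CL_def)
  next
    fix \<pi> assume "\<pi> \<in> (\<Union>\<sigma>\<in>CL. ISO U \<rho> U \<sigma>)"
    then show "\<pi> \<in> {\<pi>. \<pi> permutes U}" using ISO_permutes[OF \<rho>] by (auto simp: CL_def)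
  qed
  have "fact (card U) = card {\<pi>. \<pi> permutes U}" by (simp add: card_permutations fU)
  also have "\<dots> = (\<Sum>\<sigma>\<in>CL. card (ISO U \<rho> U \<sigma>))"
    unfolding Un
  proof (rule card_UN_disjoint[OF fCL])
    show "\<forall>\<sigma>\<in>CL. finite (ISO U \<rho> U \<sigma>)"
      using ISO_permutes[OF \<rho>] finite_permutations[OF fU]
      by (auto simp: CL_def intro: finite_subset[of _ "{\<pi>. \<pi> permutes U}"])
    show "\<forall>\<sigma>1\<in>CL. \<forall>\<sigma>2\<in>CL. \<sigma>1 \<noteq> \<sigma>2 \<longrightarrow> ISO U \<rho> U \<sigma>1 \<inter> ISO U \<rho> U \<sigma>2 = {}"
    proof (intro ballI impI)
      fix \<sigma>1 \<sigma>2 assume s: "\<sigma>1 \<in> CL" "\<sigma>2 \<in> CL" "\<sigma>1 \<noteq> \<sigma>2"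
      show "ISO U \<rho> U \<sigma>1 \<inter> ISO U \<rho> U \<sigma>2 = {}"
      proof (rule ccontr)
        assume "ISO U \<rho> U \<sigma>1 \<inter> ISO U \<rho> U \<sigma>2 \<noteq> {}"
        then obtain \<pi> where "\<pi> \<in> ISO U \<rho> U \<sigma>1" "\<pi> \<in> ISO U \<rho> U \<sigma>2" by blast
        then have p: "\<pi> permutes U" and e: "\<sigma>1 \<circ> \<pi> = \<sigma>2 \<circ> \<pi>"
          using ISO_permutes[OF \<rho>] s by (auto simp: CL_def)
        have "\<sigma>1 = \<sigma>2"
        proof
          fix x
          obtain y where "x = \<pi> y" using permutes_surj[OF p] by (metis surj_def)
          then show "\<sigma>1 x = \<sigma>2 x" using e by (metis comp_apply)
        qed
        then show False using s by simp
      qed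
    qed
  qed
  also have "\<dots> = (\<Sum>\<sigma>\<in>CL. z_fac (ct U \<rho>))"
  proof (rule sum.cong[OF refl])
    fix \<sigma> assume "\<sigma> \<in> CL"
    then have ps: "\<sigma> permutes U" "ct U \<rho> = ct U \<sigma>" by (auto simp: CL_def)
    show "card (ISO U \<rho> U \<sigma>) = z_fac (ct U \<rho>)"
      by (rule iso_count[OF prho _ fU fU permutes_closed[OF \<rho>] permutes_closed[OF ps(1)] ps(2)])
         (use ps fU permutation_permutes in blast)
  qed
  finally show ?thesis by (simp add: CL_def)
qed


lemma ct_union:
  assumes "\<sigma> ` A \<subseteq> A" "\<sigma> ` B \<subseteq> B" "A \<inter> B = {}" "finite A" "finite B"
  shows "ct (A \<union> B) \<sigma> = ct A \<sigma> + ct B \<sigma>"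
proof -
  have d: "Orbits.orbit \<sigma> ` A \<inter> Orbits.orbit \<sigma> ` B = {}"
  proof (rule ccontr)
    assume "Orbits.orbit \<sigma> ` A \<inter> Orbits.orbit \<sigma> ` B \<noteq> {}"
    then obtain x y where "x \<in> A" "y \<in> B" "Orbits.orbit \<sigma> x = Orbits.orbit \<sigma> y" by blast
    moreover have "Orbits.orbit \<sigma> x \<subseteq> A" "Orbits.orbit \<sigma> y \<subseteq> B"
      using orbit_sub[OF assms(1) \<open>x \<in> A\<close>] orbit_sub[OF assms(2) \<open>y \<in> B\<close>] by auto
    ultimately show False using orbit_nonempty[of \<sigma> x] assms(3) by blast
  qed
  show ?thesis unfolding ct_def image_Un
    by (subst mset_set_Union) (use d assms in auto)
qed

lemma ct_cong:
  assumes "\<sigma> ` A \<subseteq> A" "\<And>x. x \<in> A \<Longrightarrow> \<sigma> x = \<sigma>' x"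
  shows "ct A \<sigma> = ct A \<sigma>'"
proof -
  have "Orbits.orbit \<sigma> x = Orbits.orbit \<sigma>' x" if "x \<in> A" for x
    by (rule orbit_cong0[OF that]) (use assms in auto)
  then have "Orbits.orbit \<sigma> ` A = Orbits.orbit \<sigma>' ` A" by auto
  then show ?thesis by (simp add: ct_def)
qed

lemma orbit_cycle:
  assumes "distinct cs" "x \<in> set cs"
  shows "Orbits.orbit (cycle_of_list cs) x = set cs"
proof
  show "Orbits.orbit (cycle_of_list cs) x \<subseteq> set cs"
    by (rule permutes_orbit_subset[OF cycle_permutes assms(2)])
  show "set cs \<subseteq> Orbits.orbit (cycle_of_list cs) x"
  proof
    fix y assume "y \<in> set cs"
    then obtain j where j: "j < length cs" "y = cs ! j" by (metis in_set_conv_nth)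
    obtain i where i: "i < length cs" "x = cs ! i" using assms(2) by (metis in_set_conv_nth)
    define n where "n = j + length cs - i"
    have "(cycle_of_list cs ^^ n) x = map (cycle_of_list cs ^^ n) cs ! i" using i by simp
    also have "\<dots> = rotate n cs ! i" using cyclic_rotation[OF assms(1)] by simp
    also have "\<dots> = cs ! ((n + i) mod length cs)" using i by (simp add: nth_rotate)
    also have "(n + i) mod length cs = j" using i j by (simp add: n_def)
    finally have "(cycle_of_list cs ^^ n) x = y" using j by simp
    then show "y \<in> Orbits.orbit (cycle_of_list cs) x"
      using orbit_funpow_in[OF permutation_of_cycle] by metis
  qed
qed

lemma exists_type:
  "0 \<notin># lam \<Longrightarrow> \<exists>\<sigma>. \<sigma> permutes {1..sum_mset lam} \<and> ct {1..sum_mset lam} \<sigma> = lam"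
proof (induction lam)
  case empty
  have "id permutes {1..sum_mset ({#} :: nat multiset)}" by (simp add: permutes_id)
  moreover have "ct {1..sum_mset ({#} :: nat multiset)} id = {#}" by (simp add: ct_def)
  ultimately show ?case by blast
next
  case (add k lam)
  then obtain \<sigma> where \<sigma>: "\<sigma> permutes {1..sum_mset lam}" "ct {1..sum_mset lam} \<sigma> = lam" by auto
  define m where "m = sum_mset lam"
  have kpos: "k > 0" using add.prems by (metis gr0I union_single_eq_member)
  define cs where "cs = [m+1..<m+k+1]"
  define c where "c = cycle_of_list cs"
  define A where "A = {1..m}"
  define B where "B = {m+1..m+k}"
  have dcs: "distinct cs" by (simp add: cs_def)
  have Bcs: "set cs = B" by (auto simp: cs_def B_def)
  have cB: "c permutes B" unfolding c_def Bcs[symmetric] by (rule cycle_permutes)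
  have sA: "\<sigma> permutes A" using \<sigma> by (simp add: A_def m_def)
  have AB: "A \<union> B = {1..sum_mset (add_mset k lam)}" using kpos by (auto simp: A_def B_def m_def)
  have AB0: "A \<inter> B = {}" by (auto simp: A_def B_def)
  define \<sigma>' where "\<sigma>' = \<sigma> \<circ> c"
  have p': "\<sigma>' permutes A \<union> B" unfolding \<sigma>'_def
    by (rule permutes_compose) (use permutes_subset cB sA in blast)+
  have onA: "\<sigma>' x = \<sigma> x" if "x \<in> A" for x
  proof -
    have "x \<notin> B" using that AB0 by blast
    then show ?thesis using permutes_not_in[OF cB] by (simp add: \<sigma>'_def)
  qed
  have onB: "\<sigma>' x = c x" if "x \<in> B" for x
  proof -
    have "c x \<in> B" using cB that by (simp add: permutes_in_image)
    then have "c x \<notin> A" using AB0 by blast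
    then show ?thesis using permutes_not_in[OF sA] by (simp add: \<sigma>'_def)
  qed
  have clA: "\<sigma>' ` A \<subseteq> A" using onA permutes_closed[OF sA] by auto
  have clB: "\<sigma>' ` B \<subseteq> B" using onB permutes_closed[OF cB] by auto
  have ctA: "ct A \<sigma>' = lam"
    using ct_cong[OF permutes_closed[OF sA], of \<sigma>'] onA \<sigma>(2) by (simp add: A_def m_def)
  have ctB: "ct B \<sigma>' = {#k#}"
  proof -
    have e1: "ct B \<sigma>' = ct B c" using ct_cong[OF clB, of c] onB by simp
    have ob: "\<And>x. x \<in> B \<Longrightarrow> Orbits.orbit c x = B" using orbit_cycle[OF dcs] Bcs by (simp add: c_def)
    have "m + 1 \<in> B" using kpos by (simp add: B_def)
    then have "Orbits.orbit c ` B = {B}" using ob by (auto simp: image_iff)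
    then have "ct B c = {#card B#}" by (simp add: ct_def)
    then show ?thesis using e1 by (simp add: B_def)
  qed
  have "ct (A \<union> B) \<sigma>' = add_mset k lam"
    using ct_union[OF clA clB AB0] ctA ctB by (simp add: A_def B_def)
  then show ?case using p' AB by metis
qed

lemma ct_partition:
  assumes "\<sigma> permutes {1..n}"
  shows "ct {1..n} \<sigma> \<in> partitions n"
proof -
  have ps: "permutation \<sigma>" using assms permutation_permutes by blast
  let ?O = "Orbits.orbit \<sigma> ` {1..n}"
  have pw: "pairwise disjnt ?O"
  proof (rule pairwiseI)
    fix C D assume "C \<in> ?O" "D \<in> ?O" "C \<noteq> D"
    then obtain x y where "C = Orbits.orbit \<sigma> x" "D = Orbits.orbit \<sigma> y" by auto
    then show "disjnt C D" using \<open>C \<noteq> D\<close> orbit_disj[OF ps] unfolding disjnt_def by blast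
  qed
  have U: "\<Union> ?O = {1..n}"
    using orbit_sub[OF permutes_closed[OF assms]] orbit_self[OF ps] by blast
  have "sum_mset (ct {1..n} \<sigma>) = (\<Sum>C\<in>?O. card C)"
    unfolding ct_def by (simp add: sum_unfold_sum_mset)
  also have "\<dots> = card (\<Union> ?O)"
    by (rule card_Union_disjoint[OF pw, symmetric]) (use orbit_finite[OF ps] in auto)
  also have "\<dots> = n" using U by simp
  finally have s: "sum_mset (ct {1..n} \<sigma>) = n" .
  have z: "0 \<notin># ct {1..n} \<sigma>" by (rule ct_pos[OF ps]) simp
  have "\<forall>x\<in>#ct {1..n} \<sigma>. 0 < x"
  proof
    fix x assume "x \<in># ct {1..n} \<sigma>"
    then have "x \<noteq> 0" using z by metis
    then show "0 < x" by simp
  qed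
  then show ?thesis using s unfolding partitions_def by simp
qed

lemma size_le_sum: "0 \<notin># lam \<Longrightarrow> size lam \<le> sum_mset (lam :: nat multiset)"
proof (induction lam)
  case empty then show ?case by simp
next
  case (add x lam)
  then have "size lam \<le> sum_mset lam" "x \<ge> 1" by (auto simp: Suc_le_eq gr0I)
  then show ?case by simp
qed

lemma finite_partitions: "finite (partitions n)"
proof -
  have "partitions n \<subseteq> mset ` {xs. set xs \<subseteq> {0..n} \<and> length xs \<le> n}"
  proof
    fix lam assume "lam \<in> partitions n"
    then have p: "0 \<notin># lam" "sum_mset lam = n" by (auto simp: partitions_def)
    obtain xs where xs: "mset xs = lam" using ex_mset by blast
    have "\<forall>x\<in>set xs. x \<le> n"
    proof
      fix x assume "x \<in> set xs"
      then have "x \<in># lam" using xs by auto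
      then show "x \<le> n" using p(2) by (metis le_add1 sum_mset.remove)
    qed
    moreover have "length xs \<le> n" using size_le_sum[OF p(1)] p(2) xs by auto
    ultimately show "lam \<in> mset ` {xs. set xs \<subseteq> {0..n} \<and> length xs \<le> n}" using xs by auto
  qed
  then show ?thesis using finite_lists_length_le[of "{0..n}" n] finite_subset by blast
qed


lemma Fx_le:
  assumes s: "\<sigma> permutes {1..n}" and t: "\<tau> permutes {1..n}" and p: "\<pi> permutes {1..n}"
    and c: "\<pi> \<circ> \<sigma> = \<tau> \<circ> \<pi>"
  shows "Fx n \<sigma> \<le> Fx n \<tau>"
  unfolding Fx_def
proof (rule card_inj_on_le)
  show "inj_on (act \<pi>) {X \<in> BT n. act \<sigma> X = X}"
    by (rule inj_onI) (metis act_inv(1)[OF p])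
  show "act \<pi> ` {X \<in> BT n. act \<sigma> X = X} \<subseteq> {X \<in> BT n. act \<tau> X = X}"
  proof
    fix Y assume "Y \<in> act \<pi> ` {X \<in> BT n. act \<sigma> X = X}"
    then obtain X where X: "X \<in> BT n" "act \<sigma> X = X" "Y = act \<pi> X" by auto
    have "act \<tau> Y = act (\<tau> \<circ> \<pi>) X" using X by (simp add: act_comp)
    also have "\<dots> = act \<pi> (act \<sigma> X)" using c by (simp add: act_comp[symmetric])
    finally show "Y \<in> {X \<in> BT n. act \<tau> X = X}" using X act_BT[OF p] by simp
  qed
  show "finite {X \<in> BT n. act \<tau> X = X}" using finite_BT by simp
qed

lemma Fx_conj:
  assumes s: "\<sigma> permutes {1..n}" and t: "\<tau> permutes {1..n}" and p: "\<pi> permutes {1..n}"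
    and c: "\<pi> \<circ> \<sigma> = \<tau> \<circ> \<pi>"
  shows "Fx n \<sigma> = Fx n \<tau>"
proof -
  have pi: "Hilbert_Choice.inv \<pi> permutes {1..n}" using p by (rule permutes_inv)
  have "Hilbert_Choice.inv \<pi> \<circ> \<tau> = \<sigma> \<circ> Hilbert_Choice.inv \<pi>"
  proof
    fix x
    obtain y where y: "x = \<pi> y" using permutes_surj[OF p] by (metis surj_def)
    have "\<tau> (\<pi> y) = \<pi> (\<sigma> y)" using c by (metis comp_apply)
    then show "(Hilbert_Choice.inv \<pi> \<circ> \<tau>) x = (\<sigma> \<circ> Hilbert_Choice.inv \<pi>) x"
      using y permutes_inverses(2)[OF p] by simp
  qed
  then have "Fx n \<tau> \<le> Fx n \<sigma>" by (rule Fx_le[OF t s pi])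
  moreover have "Fx n \<sigma> \<le> Fx n \<tau>" by (rule Fx_le[OF s t p c])
  ultimately show ?thesis by simp
qed

lemma perm_of_type_props:
  assumes "\<sigma> permutes {1..n}"
  shows "perm_of_type n (cycle_type n \<sigma>) permutes {1..n}"
    "cycle_type n (perm_of_type n (cycle_type n \<sigma>)) = cycle_type n \<sigma>"
proof -
  have "\<exists>\<rho>. \<rho> permutes {1..n} \<and> cycle_type n \<rho> = cycle_type n \<sigma>" using assms by blast
  then have "perm_of_type n (cycle_type n \<sigma>) permutes {1..n} \<and>
      cycle_type n (perm_of_type n (cycle_type n \<sigma>)) = cycle_type n \<sigma>"
    unfolding perm_of_type_def by (rule someI_ex)
  then show "perm_of_type n (cycle_type n \<sigma>) permutes {1..n}"
    "cycle_type n (perm_of_type n (cycle_type n \<sigma>)) = cycle_type n \<sigma>" by auto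
qed

lemma conj_rep:
  assumes s: "\<sigma> permutes {1..n}"
  obtains \<pi> where "\<pi> permutes {1..n}"
    "\<pi> \<circ> perm_of_type n (cycle_type n \<sigma>) = \<sigma> \<circ> \<pi>"
proof -
  let ?\<rho> = "perm_of_type n (cycle_type n \<sigma>)"
  have r: "?\<rho> permutes {1..n}" "cycle_type n ?\<rho> = cycle_type n \<sigma>" using perm_of_type_props[OF s] by auto
  then have "ct {1..n} ?\<rho> = ct {1..n} \<sigma>" using cycle_type_ct s by metis
  then show ?thesis using conj_exists[OF r(1) s] that by blast
qed

lemma Fx_type:
  assumes s: "\<sigma> permutes {1..n}"
  shows "Fx n \<sigma> = r_fix n (cycle_type n \<sigma>)"
proof -
  let ?\<rho> = "perm_of_type n (cycle_type n \<sigma>)"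
  obtain \<pi> where p: "\<pi> permutes {1..n}" and c: "\<pi> \<circ> ?\<rho> = \<sigma> \<circ> \<pi>" using conj_rep[OF s] by blast
  have "Fx n ?\<rho> = Fx n \<sigma>" by (rule Fx_conj[OF perm_of_type_props(1)[OF s] s p c])
  then show ?thesis by (simp add: r_fix_def Fx_def)
qed

lemma Fx_sq:
  assumes s: "\<sigma> permutes {1..n}"
  shows "Fx n (\<sigma> \<circ> \<sigma>) = r_fix n (sq_type n (cycle_type n \<sigma>))"
proof -
  let ?\<rho> = "perm_of_type n (cycle_type n \<sigma>)"
  have r: "?\<rho> permutes {1..n}" using perm_of_type_props[OF s] by auto
  obtain \<pi> where p: "\<pi> permutes {1..n}" and c: "\<pi> \<circ> ?\<rho> = \<sigma> \<circ> \<pi>" using conj_rep[OF s] by blast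
  have c2: "\<pi> \<circ> (?\<rho> \<circ> ?\<rho>) = (\<sigma> \<circ> \<sigma>) \<circ> \<pi>" using c by (metis comp_assoc)
  have rr: "?\<rho> \<circ> ?\<rho> permutes {1..n}" by (rule permutes_compose[OF r r])
  have ss: "\<sigma> \<circ> \<sigma> permutes {1..n}" by (rule permutes_compose[OF s s])
  have "Fx n (\<sigma> \<circ> \<sigma>) = Fx n (?\<rho> \<circ> ?\<rho>)" using Fx_conj[OF rr ss p c2] by simp
  also have "\<dots> = r_fix n (cycle_type n (?\<rho> \<circ> ?\<rho>))" by (rule Fx_type[OF rr])
  finally show ?thesis by (simp add: sq_type_def)
qed

lemma class_card:
  assumes "lam \<in> partitions n"
  shows "card {\<sigma>. \<sigma> permutes {1..n} \<and> cycle_type n \<sigma> = lam} * z_fac lam = fact n"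
proof -
  have p: "0 \<notin># lam" "sum_mset lam = n" using assms by (auto simp: partitions_def)
  obtain \<rho> where r: "\<rho> permutes {1..n}" "ct {1..n} \<rho> = lam" using exists_type[OF p(1)] p(2) by auto
  have "{\<sigma>. \<sigma> permutes {1..n} \<and> cycle_type n \<sigma> = lam} = {\<sigma>. \<sigma> permutes {1..n} \<and> ct {1..n} \<sigma> = ct {1..n} \<rho>}"
    using cycle_type_ct r(2) by auto
  then show ?thesis using class_count[OF r(1)] r(2) by simp
qed

theorem main:
  fixes n :: nat
  shows "real (num_tanglegrams n) =
    1/2 * (\<Sum>lam\<in>partitions n. real (r_fix n lam) ^ 2 / real (z_fac lam))
  + 1/2 * (\<Sum>lam\<in>partitions n. real (r_fix n (sq_type n lam)) / real (z_fac lam))"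
proof -
  define Perm where "Perm = {\<sigma>. \<sigma> permutes {1..n}}"
  define h where "h lam = r_fix n lam ^ 2 + r_fix n (sq_type n lam)" for lam
  define CL where "CL lam = {\<sigma> \<in> Perm. cycle_type n \<sigma> = lam}" for lam
  have fP: "finite Perm" unfolding Perm_def by (rule finite_permutations) simp
  have "2 * (num_tanglegrams n * fact n) = (\<Sum>\<sigma>\<in>Perm. 2 * card {M \<in> TG n. image_mset (act \<sigma>) M = M})"
    unfolding burnside_TG Perm_def by (simp add: sum_distrib_left)
  also have "\<dots> = (\<Sum>\<sigma>\<in>Perm. h (cycle_type n \<sigma>))"
    by (rule sum.cong[OF refl]) (simp add: Perm_def fixed_TG_count Fx_type Fx_sq h_def)
  also have "\<dots> = (\<Sum>lam\<in>partitions n. (\<Sum>\<sigma>\<in>CL lam. h (cycle_type n \<sigma>)))"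
    unfolding CL_def
  proof (rule sum.group[symmetric, OF fP finite_partitions])
    have ctp: "\<And>\<sigma>. \<sigma> permutes {1..n} \<Longrightarrow> cycle_type n \<sigma> \<in> partitions n"
      using cycle_type_ct ct_partition by simp
    show "cycle_type n ` Perm \<subseteq> partitions n" using ctp by (auto simp: Perm_def)
  qed
  also have "\<dots> = (\<Sum>lam\<in>partitions n. card (CL lam) * h lam)"
    by (rule sum.cong[OF refl]) (simp add: CL_def)
  finally have eq: "2 * (num_tanglegrams n * fact n) = (\<Sum>lam\<in>partitions n. card (CL lam) * h lam)" .
  have cl: "real (card (CL lam)) = fact n / real (z_fac lam)" if "lam \<in> partitions n" for lam
  proof -
    have "card (CL lam) * z_fac lam = fact n" using class_card[OF that] by (simp add: CL_def Perm_def)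
    moreover have "z_fac lam > 0" using that by (intro z_fac_pos) (auto simp: partitions_def)
    ultimately show ?thesis by (simp add: field_simps flip: of_nat_mult)
  qed
  have "2 * (real (num_tanglegrams n) * fact n) = (\<Sum>lam\<in>partitions n. real (card (CL lam)) * real (h lam))"
    using arg_cong[OF eq, of real] by simp
  also have "\<dots> = (\<Sum>lam\<in>partitions n. fact n * (real (h lam) / real (z_fac lam)))"
    by (rule sum.cong[OF refl]) (simp add: cl)
  also have "\<dots> = fact n * (\<Sum>lam\<in>partitions n. real (h lam) / real (z_fac lam))"
    by (simp add: sum_distrib_left)
  finally have "2 * real (num_tanglegrams n) = (\<Sum>lam\<in>partitions n. real (h lam) / real (z_fac lam))"
    by simp
  then show ?thesis
    by (simp add: h_def add_divide_distrib sum.distrib)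
qed


theorem mainTheorem1:
  fixes n :: nat
  assumes "n \<ge> 1"
  shows "real (num_tanglegrams n) =
    1/2 * (\<Sum>lam\<in>partitions n. real (r_fix n lam) ^ 2 / real (z_fac lam))
  + 1/2 * (\<Sum>lam\<in>partitions n. real (r_fix n (sq_type n lam)) / real (z_fac lam))"
  by (rule main)

end
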